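(* Let $X$ be a $T_1$ space and $\mathcal{P}$ an ideal of closed subsets of $X$ containing every singleton subset of $X$. Then $C(X)_\mathcal{P}$ is a Noetherian ring if and only if $X$ is finite.
   Context: An ideal of closed subsets of $X$ is a family $\mathcal{P}$ of closed subsets closed under finite unions and under passing to closed subsets. $D_f$ is the set of discontinuity points of $f\in\mathbb{R}^X$; $C(X)_\mathcal{P}=\{f\in\mathbb{R}^X\colon\overline{D_f}\in\mathcal{P}\}$ with pointwise operations. *)

theory Defs
  imports "HOL-Analysis.Analysis" "HOL-Algebra.Ring_Divisibility"
begin

definition closed_ideal :: "'a topology \<Rightarrow> 'a set set \<Rightarrow> bool" where
  "closed_ideal X P \<longleftrightarrow>
     (\<forall>A\<in>P. closedin X A) \<and> {} \<in> P \<and>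
     (\<forall>A\<in>P. \<forall>B\<in>P. A \<union> B \<in> P) \<and>
     (\<forall>A\<in>P. \<forall>B. closedin X B \<and> B \<subseteq> A \<longrightarrow> B \<in> P)"

definition cont_at :: "'a topology \<Rightarrow> ('a \<Rightarrow> real) \<Rightarrow> 'a \<Rightarrow> bool" where
  "cont_at X f x \<longleftrightarrow>
     (\<forall>V. open V \<and> f x \<in> V \<longrightarrow> (\<exists>U. openin X U \<and> x \<in> U \<and> f ` U \<subseteq> V))"

definition disc :: "'a topology \<Rightarrow> ('a \<Rightarrow> real) \<Rightarrow> 'a set" where
  "disc X f = {x \<in> topspace X. \<not> cont_at X f x}"

text \<open>The ring C(X)_P: functions X \<rightarrow> R (represented as extensional functions on
  topspace X) whose discontinuity set has closure in P, with pointwise operations.\<close>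
definition CP :: "'a topology \<Rightarrow> 'a set set \<Rightarrow> ('a \<Rightarrow> real) ring" where
  "CP X P = \<lparr>carrier = {f \<in> extensional (topspace X). X closure_of (disc X f) \<in> P},
            monoid.mult = (\<lambda>f g. restrict (\<lambda>x. f x * g x) (topspace X)),
            one = restrict (\<lambda>x. 1) (topspace X),
            zero = restrict (\<lambda>x. 0) (topspace X),
            add = (\<lambda>f g. restrict (\<lambda>x. f x + g x) (topspace X))\<rparr>"

end

theory Submission imports Defs begin

lemma cont_at_tendsto:
  assumes "x \<in> topspace X"
  shows "cont_at X f x \<longleftrightarrow> (f \<longlongrightarrow> f x) (atin X x)"
proof -
  have "(f \<longlongrightarrow> f x) (atin X x) \<longleftrightarrow> limitin euclidean f (f x) (atin X x)" by simp
  also have "\<dots> \<longleftrightarrow> cont_at X f x"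
    unfolding limitin_atin_self cont_at_def using assms by simp
  finally show ?thesis by simp
qed

lemma cont_at_cong1:
  assumes "x \<in> topspace X" "\<And>y. y \<in> topspace X \<Longrightarrow> f y = g y" "cont_at X f x"
  shows "cont_at X g x"
  unfolding cont_at_def
proof (intro allI impI)
  fix V :: "real set" assume V: "open V \<and> g x \<in> V"
  have fx: "f x = g x" using assms(1) by (rule assms(2))
  have "open V" "f x \<in> V" using V fx by auto
  then obtain U where U: "openin X U" "x \<in> U" "f ` U \<subseteq> V"
    using assms(3) unfolding cont_at_def by meson
  have "g ` U \<subseteq> V"
  proof
    fix y assume "y \<in> g ` U"
    then obtain z where z: "z \<in> U" "y = g z" by blast
    then have "z \<in> topspace X" using openin_subset[OF U(1)] by blast
    then have fz: "f z = g z" by (rule assms(2))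
    have "f z \<in> V" using z(1) U(3) by blast
    then show "y \<in> V" using z(2) fz by simp
  qed
  then show "\<exists>U. openin X U \<and> x \<in> U \<and> g ` U \<subseteq> V" using U by blast
qed

lemma cont_at_cong:
  assumes "x \<in> topspace X" "\<And>y. y \<in> topspace X \<Longrightarrow> f y = g y"
  shows "cont_at X f x \<longleftrightarrow> cont_at X g x"
proof
  assume "cont_at X f x" then show "cont_at X g x"
    by (rule cont_at_cong1[OF assms(1), rotated]) (simp add: assms(2))
next
  assume "cont_at X g x" then show "cont_at X f x"
    by (rule cont_at_cong1[OF assms(1), rotated]) (simp add: assms(2))
qed

lemma disc_restrict: "disc X (restrict h (topspace X)) = disc X h"
proof -
  have "\<And>x. x \<in> topspace X \<Longrightarrow> cont_at X (restrict h (topspace X)) x \<longleftrightarrow> cont_at X h x"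
    by (rule cont_at_cong) auto
  then show ?thesis unfolding disc_def by blast
qed

lemma cont_at_add: "x \<in> topspace X \<Longrightarrow> cont_at X f x \<Longrightarrow> cont_at X g x \<Longrightarrow> cont_at X (\<lambda>x. f x + g x) x"
  by (simp add: cont_at_tendsto tendsto_add)
lemma cont_at_mult: "x \<in> topspace X \<Longrightarrow> cont_at X f x \<Longrightarrow> cont_at X g x \<Longrightarrow> cont_at X (\<lambda>x. f x * g x) x"
  by (simp add: cont_at_tendsto tendsto_mult)
lemma cont_at_minus: "x \<in> topspace X \<Longrightarrow> cont_at X f x \<Longrightarrow> cont_at X (\<lambda>x. - f x) x"
  by (simp add: cont_at_tendsto tendsto_minus)
lemma cont_at_const: "x \<in> topspace X \<Longrightarrow> cont_at X (\<lambda>x. c) x"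
  by (simp add: cont_at_tendsto)

lemma disc_add: "disc X (\<lambda>x. f x + g x) \<subseteq> disc X f \<union> disc X g"
  unfolding disc_def using cont_at_add[of _ X f g] by blast

lemma disc_mult: "disc X (\<lambda>x. f x * g x) \<subseteq> disc X f \<union> disc X g"
  unfolding disc_def using cont_at_mult[of _ X f g] by blast

lemma disc_minus: "disc X (\<lambda>x. - f x) \<subseteq> disc X f"
  unfolding disc_def using cont_at_minus[of _ X f] by blast

lemma disc_const: "disc X (\<lambda>x. c) = {}"
  unfolding disc_def using cont_at_const[of _ X c] by blast

lemma P_closure_sub:
  assumes "closed_ideal X P" "X closure_of A \<in> P" "X closure_of B \<in> P" "D \<subseteq> A \<union> B"
  shows "X closure_of D \<in> P"
proof -
  have sub: "X closure_of D \<subseteq> X closure_of A \<union> X closure_of B"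
    using closure_of_mono[OF assms(4)] by (simp add: closure_of_Un)
  have un: "X closure_of A \<union> X closure_of B \<in> P"
    using assms(1,2,3) unfolding closed_ideal_def by meson
  have cl: "closedin X (X closure_of D)" by simp
  show ?thesis using assms(1) un sub cl unfolding closed_ideal_def by meson
qed

lemma closure_empty_P: "closed_ideal X P \<Longrightarrow> X closure_of {} \<in> P"
  unfolding closed_ideal_def by simp

lemma carrier_CP: "f \<in> carrier (CP X P) \<longleftrightarrow> f \<in> extensional (topspace X) \<and> X closure_of (disc X f) \<in> P"
  by (simp add: CP_def)

lemma CP_simps:
  "f \<otimes>\<^bsub>CP X P\<^esub> g = restrict (\<lambda>x. f x * g x) (topspace X)"
  "f \<oplus>\<^bsub>CP X P\<^esub> g = restrict (\<lambda>x. f x + g x) (topspace X)"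
  "\<one>\<^bsub>CP X P\<^esub> = restrict (\<lambda>x. 1) (topspace X)"
  "\<zero>\<^bsub>CP X P\<^esub> = restrict (\<lambda>x. 0) (topspace X)"
  by (simp_all add: CP_def)

lemma CP_add_closed:
  assumes "closed_ideal X P" "f \<in> carrier (CP X P)" "g \<in> carrier (CP X P)"
  shows "f \<oplus>\<^bsub>CP X P\<^esub> g \<in> carrier (CP X P)"
proof -
  have "X closure_of (disc X (\<lambda>x. f x + g x)) \<in> P"
    using P_closure_sub[OF assms(1) _ _ disc_add[of X f g]] assms(2,3) by (simp add: carrier_CP)
  then show ?thesis by (simp add: carrier_CP CP_simps disc_restrict)
qed

lemma CP_mult_closed:
  assumes "closed_ideal X P" "f \<in> carrier (CP X P)" "g \<in> carrier (CP X P)"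
  shows "f \<otimes>\<^bsub>CP X P\<^esub> g \<in> carrier (CP X P)"
proof -
  have "X closure_of (disc X (\<lambda>x. f x * g x)) \<in> P"
    using P_closure_sub[OF assms(1) _ _ disc_mult[of X f g]] assms(2,3) by (simp add: carrier_CP)
  then show ?thesis by (simp add: carrier_CP CP_simps disc_restrict)
qed

lemma CP_minus_closed:
  assumes "closed_ideal X P" "f \<in> carrier (CP X P)"
  shows "restrict (\<lambda>x. - f x) (topspace X) \<in> carrier (CP X P)"
proof -
  have d: "disc X (\<lambda>x. - f x) \<subseteq> disc X f \<union> disc X f" using disc_minus[of X f] by simp
  have "X closure_of disc X f \<in> P" using assms(2) by (simp add: carrier_CP)
  then have "X closure_of (disc X (\<lambda>x. - f x)) \<in> P"
    using P_closure_sub[OF assms(1) _ _ d] by blast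
  then show ?thesis by (simp add: carrier_CP disc_restrict)
qed

lemma CP_const:
  assumes "closed_ideal X P"
  shows "restrict (\<lambda>x. c) (topspace X) \<in> carrier (CP X P)"
  using assms by (simp add: carrier_CP disc_restrict disc_const closed_ideal_def)


lemma CP_ring:
  assumes "closed_ideal X P"
  shows "ring (CP X P)"
proof (rule ringI)
  note ext = carrier_CP[THEN iffD1, THEN conjunct1]
  show "abelian_group (CP X P)"
  proof (rule abelian_groupI)
    fix x assume x: "x \<in> carrier (CP X P)"
    let ?y = "restrict (\<lambda>t. - x t) (topspace X)"
    have "?y \<in> carrier (CP X P)"
      using CP_minus_closed[OF assms x] .
    moreover have "?y \<oplus>\<^bsub>CP X P\<^esub> x = \<zero>\<^bsub>CP X P\<^esub>"
      by (auto simp: CP_simps fun_eq_iff)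
    ultimately show "\<exists>y\<in>carrier (CP X P). y \<oplus>\<^bsub>CP X P\<^esub> x = \<zero>\<^bsub>CP X P\<^esub>" by blast
    show "\<zero>\<^bsub>CP X P\<^esub> \<oplus>\<^bsub>CP X P\<^esub> x = x"
      using ext[OF x] by (auto simp: CP_simps fun_eq_iff extensional_def)
  qed (auto simp: CP_add_closed[OF assms, unfolded CP_simps] CP_const[OF assms, of 0, folded CP_simps] assms CP_simps fun_eq_iff)
  show "monoid (CP X P)"
  proof (rule monoidI)
    fix x assume x: "x \<in> carrier (CP X P)"
    show "\<one>\<^bsub>CP X P\<^esub> \<otimes>\<^bsub>CP X P\<^esub> x = x" "x \<otimes>\<^bsub>CP X P\<^esub> \<one>\<^bsub>CP X P\<^esub> = x"
      using ext[OF x] by (auto simp: CP_simps fun_eq_iff extensional_def)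
  qed (auto simp: CP_mult_closed[OF assms, unfolded CP_simps] CP_const[OF assms, of 1, folded CP_simps] assms CP_simps fun_eq_iff)
qed (auto simp: CP_simps fun_eq_iff distrib_left distrib_right)


lemma finite_in_P:
  assumes "closed_ideal X P" "\<And>x. x \<in> topspace X \<Longrightarrow> {x} \<in> P"
    and "finite F" "F \<subseteq> topspace X"
  shows "F \<in> P"
  using assms(3,4)
proof (induction F rule: finite_induct)
  case empty then show ?case using assms(1) unfolding closed_ideal_def by simp
next
  case (insert a F)
  then have "{a} \<in> P" "F \<in> P" using assms(2) by auto
  then have "{a} \<union> F \<in> P" using assms(1) unfolding closed_ideal_def by meson
  then show ?case by simp
qed

lemma fin_supp_carrier:
  assumes "t1_space X" "closed_ideal X P" "\<And>x. x \<in> topspace X \<Longrightarrow> {x} \<in> P"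
    and "finite F" "F \<subseteq> topspace X" "f \<in> extensional (topspace X)"
    and "\<And>x. x \<in> topspace X \<Longrightarrow> x \<notin> F \<Longrightarrow> f x = 0"
  shows "f \<in> carrier (CP X P)"
proof -
  have clF: "closedin X F" using assms(1,4,5) t1_space_closedin_finite by blast
  have FP: "F \<in> P" using finite_in_P[OF assms(2,3,4,5)] .
  have op: "openin X (topspace X - F)" using clF by (simp add: closedin_def)
  have "disc X f \<subseteq> F"
  proof
    fix x assume x: "x \<in> disc X f"
    show "x \<in> F"
    proof (rule ccontr)
      assume nF: "x \<notin> F"
      have xT: "x \<in> topspace X" using x unfolding disc_def by blast
      have "cont_at X f x"
        unfolding cont_at_def
      proof (intro allI impI)
        fix V :: "real set" assume V: "open V \<and> f x \<in> V"
        have "f x = 0" using assms(7) xT nF by blast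
        then have "0 \<in> V" using V by simp
        have "f ` (topspace X - F) \<subseteq> V"
        proof
          fix y assume "y \<in> f ` (topspace X - F)"
          then obtain z where z: "z \<in> topspace X" "z \<notin> F" "y = f z" by blast
          have "f z = 0" using assms(7) z(1,2) by blast
          then show "y \<in> V" using z(3) \<open>0 \<in> V\<close> by simp
        qed
        then show "\<exists>U. openin X U \<and> x \<in> U \<and> f ` U \<subseteq> V" using op xT nF by blast
      qed
      then show False using x unfolding disc_def by blast
    qed
  qed
  then have "X closure_of disc X f \<subseteq> F" using clF by (rule closure_of_minimal)
  moreover have "closedin X (X closure_of disc X f)" by simp
  ultimately have "X closure_of disc X f \<in> P"
    using assms(2) FP unfolding closed_ideal_def by meson
  then show ?thesis using assms(6) by (simp add: carrier_CP)
qed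

definition supp :: "'a topology \<Rightarrow> ('a \<Rightarrow> real) \<Rightarrow> 'a set" where
  "supp X f = {x \<in> topspace X. f x \<noteq> 0}"

lemma supp_ideal:
  assumes "closed_ideal X P"
    and Q0: "Q {}" and QU: "\<And>A B. Q A \<Longrightarrow> Q B \<Longrightarrow> Q (A \<union> B)"
    and QS: "\<And>A B. Q A \<Longrightarrow> B \<subseteq> A \<Longrightarrow> Q B"
  shows "ideal {f \<in> carrier (CP X P). Q (supp X f)} (CP X P)"
proof -
  let ?R = "CP X P"
  let ?I = "{f \<in> carrier (CP X P). Q (supp X f)}"
  have R: "ring ?R" by (rule CP_ring[OF assms(1)])
  interpret ring ?R by (rule R)
  have lc: "x \<otimes>\<^bsub>?R\<^esub> a \<in> ?I" if a: "a \<in> ?I" and x: "x \<in> carrier ?R" for a x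
  proof -
    have "supp X (x \<otimes>\<^bsub>?R\<^esub> a) \<subseteq> supp X a" by (auto simp: supp_def CP_simps)
    then have "Q (supp X (x \<otimes>\<^bsub>?R\<^esub> a))" using QS a by blast
    then show ?thesis using a x by simp
  qed
  have rc: "a \<otimes>\<^bsub>?R\<^esub> x \<in> ?I" if a: "a \<in> ?I" and x: "x \<in> carrier ?R" for a x
  proof -
    have "a \<otimes>\<^bsub>?R\<^esub> x = x \<otimes>\<^bsub>?R\<^esub> a" by (simp add: CP_simps mult.commute)
    then show ?thesis using lc[OF a x] by simp
  qed
  show ?thesis
  proof (rule idealI[OF R])
    show "subgroup ?I (add_monoid ?R)"
    proof (rule add.subgroupI)
      show "?I \<subseteq> carrier ?R" by blast
      have "supp X \<zero>\<^bsub>?R\<^esub> = {}" by (simp add: supp_def CP_simps)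
      then have "\<zero>\<^bsub>?R\<^esub> \<in> ?I" using Q0 by simp
      then show "?I \<noteq> {}" by blast
    next
      fix a assume a: "a \<in> ?I"
      have "\<ominus>\<^bsub>?R\<^esub> \<one>\<^bsub>?R\<^esub> \<otimes>\<^bsub>?R\<^esub> a \<in> ?I" using lc[OF a] by simp
      moreover have "\<ominus>\<^bsub>?R\<^esub> \<one>\<^bsub>?R\<^esub> \<otimes>\<^bsub>?R\<^esub> a = \<ominus>\<^bsub>?R\<^esub> a"
        using a by (simp add: l_minus)
      ultimately show "\<ominus>\<^bsub>?R\<^esub> a \<in> ?I" by simp
    next
      fix a b assume a: "a \<in> ?I" and b: "b \<in> ?I"
      have "supp X (a \<oplus>\<^bsub>?R\<^esub> b) \<subseteq> supp X a \<union> supp X b" by (auto simp: supp_def CP_simps)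
      moreover have "Q (supp X a \<union> supp X b)" using a b QU by blast
      ultimately have "Q (supp X (a \<oplus>\<^bsub>?R\<^esub> b))" using QS by blast
      then show "a \<oplus>\<^bsub>?R\<^esub> b \<in> ?I" using a b by simp
    qed
  qed (fact lc, fact rc)
qed


lemma fin_noeth:
  assumes t1: "t1_space X" and cI: "closed_ideal X P" and sg: "\<And>x. x \<in> topspace X \<Longrightarrow> {x} \<in> P"
    and fin: "finite (topspace X)"
  shows "noetherian_ring (CP X P)"
proof -
  let ?R = "CP X P"
  let ?T = "topspace X"
  interpret ring ?R by (rule CP_ring[OF cI])
  have allc: "f \<in> carrier ?R" if "f \<in> extensional ?T" for f :: "'a \<Rightarrow> real"
  proof (rule fin_supp_carrier[OF t1 cI sg fin subset_refl that])
    fix x assume "x \<in> ?T" "x \<notin> ?T" then show "f x = 0" by contradiction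
  qed
  define e where "e a = restrict (\<lambda>y. if y = a then (1::real) else 0) ?T" for a
  have e_c: "e a \<in> carrier ?R" for a by (rule allc) (simp add: e_def)
  have key: "f \<in> J"
    if J: "ideal J ?R" and F: "finite F" and eJ: "\<forall>a\<in>F. e a \<in> J"
      and f: "f \<in> extensional ?T" and f0: "\<forall>x\<in>?T. x \<notin> F \<longrightarrow> f x = 0" for J F and f :: "'a \<Rightarrow> real"
  proof -
    interpret J: ideal J ?R by (rule J)
    have "\<forall>f :: 'a \<Rightarrow> real. f \<in> extensional ?T \<longrightarrow> (\<forall>x\<in>?T. x \<notin> F \<longrightarrow> f x = 0) \<longrightarrow> f \<in> J"
      using F eJ
    proof (induction F rule: finite_induct)
      case empty
      show ?case
      proof (intro allI impI)
        fix f :: "'a \<Rightarrow> real" assume f: "f \<in> extensional ?T" and f0: "\<forall>x\<in>?T. x \<notin> {} \<longrightarrow> f x = 0"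
        have "f = \<zero>\<^bsub>?R\<^esub>"
          using f f0 by (auto simp: CP_simps fun_eq_iff extensional_def)
        then show "f \<in> J" by simp
      qed
    next
      case (insert a F)
      show ?case
      proof (intro allI impI)
        fix f :: "'a \<Rightarrow> real" assume f: "f \<in> extensional ?T" and f0: "\<forall>x\<in>?T. x \<notin> insert a F \<longrightarrow> f x = 0"
        define g where "g = restrict (\<lambda>y. if y = a then 0 else f y) ?T"
        have "g \<in> J" using insert.IH insert.prems f0 by (auto simp: g_def)
        moreover have "f \<otimes>\<^bsub>?R\<^esub> e a \<in> J" using insert.prems allc[OF f] by (simp add: J.I_l_closed)
        ultimately have "(f \<otimes>\<^bsub>?R\<^esub> e a) \<oplus>\<^bsub>?R\<^esub> g \<in> J" by simp
        moreover have "(f \<otimes>\<^bsub>?R\<^esub> e a) \<oplus>\<^bsub>?R\<^esub> g = f"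
          using f by (auto simp: CP_simps fun_eq_iff extensional_def e_def g_def)
        ultimately show "f \<in> J" by simp
      qed
    qed
    then show ?thesis using f f0 by blast
  qed
  show ?thesis
  proof (rule noetherian_ringI)
    fix I assume I: "ideal I ?R"
    interpret I: ideal I ?R by (rule I)
    define S where "S = {x \<in> ?T. \<exists>f\<in>I. f x \<noteq> 0}"
    define A where "A = e ` S"
    have finS: "finite S" using fin unfolding S_def by simp
    have Ac: "A \<subseteq> carrier ?R" using e_c unfolding A_def by blast
    have eI: "e a \<in> I" if a: "a \<in> S" for a
    proof -
      obtain g where g: "g \<in> I" "g a \<noteq> 0" and aT: "a \<in> ?T" using a unfolding S_def by blast
      define h where "h = restrict (\<lambda>y. if y = a then 1 / g a else 0) ?T"
      have "h \<in> carrier ?R" by (rule allc) (simp add: h_def)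
      then have "h \<otimes>\<^bsub>?R\<^esub> g \<in> I" using g(1) by (simp add: I.I_l_closed)
      moreover have "h \<otimes>\<^bsub>?R\<^esub> g = e a"
        using g(2) by (auto simp: CP_simps fun_eq_iff h_def e_def)
      ultimately show ?thesis by simp
    qed
    have AI: "A \<subseteq> I" using eI unfolding A_def by blast
    have sub1: "genideal ?R A \<subseteq> I" by (rule genideal_minimal[OF I AI])
    have sub2: "I \<subseteq> genideal ?R A"
    proof
      fix f assume f: "f \<in> I"
      have fc: "f \<in> carrier ?R" using f I.I_l_closed[OF f one_closed] by simp
      have fe: "f \<in> extensional ?T" using fc by (simp add: carrier_CP)
      have eA: "\<forall>a\<in>S. e a \<in> genideal ?R A" using genideal_self[OF Ac] unfolding A_def by blast
      have f0: "\<forall>x\<in>?T. x \<notin> S \<longrightarrow> f x = 0" using f unfolding S_def by blast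
      show "f \<in> genideal ?R A" by (rule key[OF genideal_ideal[OF Ac] finS eA fe f0])
    qed
    show "\<exists>A\<subseteq>carrier ?R. finite A \<and> I = genideal ?R A"
      using Ac finS sub1 sub2 unfolding A_def by blast
  qed
qed

lemma noeth_fin:
  assumes t1: "t1_space X" and cI: "closed_ideal X P" and sg: "\<And>x. x \<in> topspace X \<Longrightarrow> {x} \<in> P"
    and N: "noetherian_ring (CP X P)"
  shows "finite (topspace X)"
proof (rule ccontr)
  assume inf: "infinite (topspace X)"
  let ?R = "CP X P"
  let ?T = "topspace X"
  interpret noetherian_ring ?R by (rule N)
  define J where "J = {f \<in> carrier ?R. finite (supp X f)}"
  have J: "ideal J ?R" unfolding J_def
    by (rule supp_ideal[OF cI]) (auto intro: finite_subset)
  obtain A where A: "A \<subseteq> carrier ?R" "finite A" "J = genideal ?R A"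
    using finetely_gen[OF J] by blast
  define S where "S = \<Union> (supp X ` A)"
  have AJ: "A \<subseteq> J" using genideal_self[OF A(1)] A(3) by simp
  have finS: "finite S" unfolding S_def using A(2) AJ unfolding J_def by blast
  define K where "K = {f \<in> carrier ?R. supp X f \<subseteq> S}"
  have K: "ideal K ?R" unfolding K_def
    by (rule supp_ideal[OF cI]) auto
  have AK: "A \<subseteq> K" using A(1) unfolding K_def S_def by blast
  have JK: "J \<subseteq> K" using genideal_minimal[OF K AK] A(3) by simp
  have "\<not> ?T \<subseteq> S" using inf finS finite_subset by blast
  then obtain a where a: "a \<in> ?T" "a \<notin> S" by blast
  define e where "e = restrict (\<lambda>y. if y = a then (1::real) else 0) ?T"
  have ec: "e \<in> carrier ?R"
    by (rule fin_supp_carrier[OF t1 cI sg, of "{a}"]) (auto simp: e_def a)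
  have se: "supp X e = {a}" using a by (auto simp: supp_def e_def)
  have "e \<in> J" using ec se unfolding J_def by simp
  then have "e \<in> K" using JK by blast
  then show False using se a unfolding K_def by blast
qed

theorem theorem5p11:
  fixes X :: "'a topology" and P :: "'a set set"
  assumes "t1_space X"
    and "closed_ideal X P"
    and "\<And>x. x \<in> topspace X \<Longrightarrow> {x} \<in> P"
  shows "noetherian_ring (CP X P) \<longleftrightarrow> finite (topspace X)"
  using fin_noeth[OF assms] noeth_fin[OF assms] by blast

end
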